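(* There exists a three-point set $X\subset \mathbb{S}^1$ that is not a spherical suborbit of any finite group action: there is no finite group $G$, no $n\ge 2$ and no orthogonal linear action of $G$ on $\mathbb{R}^n$ (with $\mathbb{R}^2\subset\mathbb{R}^n$ included as the first two coordinates, so $\mathbb{S}^1\subset\mathbb{S}^{n-1}$) such that $X$ is contained in a single $G$-orbit.
   Context: $\mathbb{S}^{m-1}$ denotes the unit sphere in $\mathbb{R}^m$. A set $X\subset\mathbb{S}^{k-1}$ is a spherical suborbit of a group $G$ if $X$ is contained in an orbit of $G$ with respect to some orthogonal action of $G$ on a sphere $\mathbb{S}^{n-1}$ ($n\ge k$) containing $\mathbb{S}^{k-1}$ isometrically in the standard way. *)

theory Defs
  imports Complex_Main "HOL-Algebra.Group"
begin

text \<open>Vectors of R^n are modelled as functions nat \<Rightarrow> real vanishing at all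
  indices \<ge> n; linear maps of R^n as matrices nat \<Rightarrow> nat \<Rightarrow> real
  (only entries with indices < n matter).\<close>

definition in_Rn :: "nat \<Rightarrow> (nat \<Rightarrow> real) \<Rightarrow> bool" where
  "in_Rn n x \<longleftrightarrow> (\<forall>i\<ge>n. x i = 0)"

definition mat_apply :: "nat \<Rightarrow> (nat \<Rightarrow> nat \<Rightarrow> real) \<Rightarrow> (nat \<Rightarrow> real) \<Rightarrow> (nat \<Rightarrow> real)" where
  "mat_apply n M x = (\<lambda>i. if i < n then (\<Sum>j<n. M i j * x j) else 0)"

definition orthogonal_mat :: "nat \<Rightarrow> (nat \<Rightarrow> nat \<Rightarrow> real) \<Rightarrow> bool" where
  "orthogonal_mat n M \<longleftrightarrow>
     (\<forall>i<n. \<forall>j<n. (\<Sum>k<n. M k i * M k j) = (if i = j then 1 else 0))"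

definition orthogonal_action :: "('g, 'b) monoid_scheme \<Rightarrow> nat \<Rightarrow> ('g \<Rightarrow> nat \<Rightarrow> nat \<Rightarrow> real) \<Rightarrow> bool" where
  "orthogonal_action G n \<rho> \<longleftrightarrow>
     (\<forall>g\<in>carrier G. orthogonal_mat n (\<rho> g)) \<and>
     (\<forall>i<n. \<forall>j<n. \<rho> \<one>\<^bsub>G\<^esub> i j = (if i = j then 1 else 0)) \<and>
     (\<forall>g\<in>carrier G. \<forall>h\<in>carrier G. \<forall>i<n. \<forall>j<n.
        \<rho> (g \<otimes>\<^bsub>G\<^esub> h) i j = (\<Sum>k<n. \<rho> g i k * \<rho> h k j))"

definition circle :: "(real \<times> real) set" where
  "circle = {(a, b). a\<^sup>2 + b\<^sup>2 = 1}"

definition embed2 :: "real \<times> real \<Rightarrow> nat \<Rightarrow> real" where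
  "embed2 p = (\<lambda>i. if i = 0 then fst p else if i = 1 then snd p else 0)"

definition in_single_orbit :: "('g, 'b) monoid_scheme \<Rightarrow> nat \<Rightarrow> ('g \<Rightarrow> nat \<Rightarrow> nat \<Rightarrow> real)
    \<Rightarrow> (real \<times> real) set \<Rightarrow> bool" where
  "in_single_orbit G n \<rho> X \<longleftrightarrow>
     (\<exists>y. in_Rn n y \<and> (\<forall>p\<in>X. \<exists>g\<in>carrier G. embed2 p = mat_apply n (\<rho> g) y))"

end

theory Submission
  imports Defs "Jordan_Normal_Form.Determinant" "HOL-Library.Z2"
begin

lemma bitc: "(of_int ((if P then 2 else 0) + (if Q then 2 else 0) - (if R then 1 else 0)) :: bit) = (if R then 1 else 0)"
  by (cases P; cases Q; cases R; simp)

lemma A: "map_mat (of_int :: int \<Rightarrow> bit) (mat N N (\<lambda>(i,j). (if P i j then 2 else 0) + (if Q i j then 2 else 0) - (if i = j then 1 else 0))) = 1\<^sub>m N"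
  by (rule eq_matI) (simp_all add: bitc)
lemma B: fixes B :: "int mat" assumes "map_mat (of_int :: int \<Rightarrow> bit) B = 1\<^sub>m N" shows "det B \<noteq> 0"
proof -
  have "det (map_mat (of_int :: int \<Rightarrow> bit) B) = of_int (det B)" by (rule of_int_hom.hom_det)
  hence "of_int (det B) = (1::bit)" using assms by simp
  thus ?thesis by auto
qed

lemma X1:
  fixes N :: nat and L :: "'a list" and s t :: "'a \<Rightarrow> 'a"
  defines "Bi \<equiv> mat N N (\<lambda>(i,j). (if L!j = s (L!i) then 2 else 0) + (if L!j = t (L!i) then 2 else 0) - (if i = j then 1 else 0)) :: int mat"
  shows "det Bi \<noteq> 0"
  unfolding Bi_def by (rule B[OF A])

lemma sum_pick:
  assumes "distinct L" "x \<in> set L"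
  shows "(\<Sum>j<length L. (if L!j = x then (c::real) else 0) * f (L!j)) = c * f x"
proof -
  obtain k where k: "k < length L" "L!k = x" using assms(2) by (meson in_set_conv_nth)
  have "\<And>j. j < length L \<Longrightarrow> (L!j = x) = (j = k)" using assms(1) k nth_eq_iff_index_eq by metis
  hence "(\<Sum>j<length L. (if L!j = x then (c::real) else 0) * f (L!j)) = (\<Sum>j<length L. if j = k then c * f x else 0)"
    by (intro sum.cong) (auto simp: k)
  also have "\<dots> = c * f x" using k by simp
  finally show ?thesis .
qed

lemma X2:
  fixes N :: nat and L :: "'a list" and s t :: "'a \<Rightarrow> 'a" and F :: "'a \<Rightarrow> real"
  defines "Bi \<equiv> mat N N (\<lambda>(i,j). (if L!j = s (L!i) then 2 else 0) + (if L!j = t (L!i) then 2 else 0) - (if i = j then 1 else 0)) :: int mat"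
  assumes dBi: "det Bi \<noteq> 0" and L: "distinct L" and N: "N = length L"
    and cs: "\<forall>h\<in>set L. s h \<in> set L" and ct: "\<forall>h\<in>set L. t h \<in> set L"
    and rel: "\<forall>h\<in>set L. 2 * F (s h) + 2 * F (t h) - F h = 0"
  shows "\<forall>h\<in>set L. F h = 0"
proof -
  define BR :: "real mat" where "BR = map_mat of_int Bi"
  have BRc: "BR \<in> carrier_mat N N" unfolding BR_def Bi_def by simp
  have "det BR = of_int (det Bi)" unfolding BR_def by (rule of_int_hom.hom_det)
  hence dBR: "det BR \<noteq> 0" using dBi by simp
  define v where "v = vec N (\<lambda>j. F (L!j))"
  have vc: "v \<in> carrier_vec N" unfolding v_def by simp
  have "BR *\<^sub>v v = 0\<^sub>v N"
  proof (rule eq_vecI)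
    fix i assume i: "i < dim_vec (0\<^sub>v N :: real vec)"
    hence i': "i < N" by simp
    have Li: "L!i \<in> set L" using i' N by auto
    have "(BR *\<^sub>v v) $ i = (\<Sum>j<N. BR $$ (i,j) * F (L!j))"
      using i' BRc unfolding v_def by (simp add: mult_mat_vec_def scalar_prod_def atLeast0LessThan)
    also have "\<dots> = (\<Sum>j<N. (if L!j = s (L!i) then 2 else 0) * F (L!j) + (if L!j = t (L!i) then 2 else 0) * F (L!j) - (if j = i then F (L!i) else 0))"
      using i' by (intro sum.cong) (auto simp: BR_def Bi_def algebra_simps)
    also have "\<dots> = 2 * F (s (L!i)) + 2 * F (t (L!i)) - F (L!i)"
      using sum_pick[OF L, of "s (L!i)" 2 F] sum_pick[OF L, of "t (L!i)" 2 F] cs ct Li i'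
      by (simp add: sum.distrib sum_subtractf N sum.delta sum.delta')
    also have "\<dots> = 0" using rel Li by auto
    finally show "(BR *\<^sub>v v) $ i = 0\<^sub>v N $ i" using i' by simp
  qed (use BRc in auto)
  hence "v = 0\<^sub>v N" using det_0_iff_vec_prod_zero_field[OF BRc] dBR vc by blast
  hence "\<forall>j<N. F (L!j) = 0" unfolding v_def by (metis index_vec index_zero_vec(1))
  thus ?thesis using N by (metis in_set_conv_nth)
qed


lemma mat_apply_mult:
  assumes act: "orthogonal_action G n \<rho>" and g: "g \<in> carrier G" and h: "h \<in> carrier G"
  shows "mat_apply n (\<rho> (g \<otimes>\<^bsub>G\<^esub> h)) y = mat_apply n (\<rho> g) (mat_apply n (\<rho> h) y)"
proof (rule ext)
  fix i
  show "mat_apply n (\<rho> (g \<otimes>\<^bsub>G\<^esub> h)) y i = mat_apply n (\<rho> g) (mat_apply n (\<rho> h) y) i"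
  proof (cases "i < n")
    case True
    have "(\<Sum>j<n. \<rho> (g \<otimes>\<^bsub>G\<^esub> h) i j * y j) = (\<Sum>j<n. (\<Sum>k<n. \<rho> g i k * \<rho> h k j) * y j)"
      using act g h True unfolding orthogonal_action_def by (intro sum.cong) auto
    also have "\<dots> = (\<Sum>k<n. \<rho> g i k * (\<Sum>j<n. \<rho> h k j * y j))"
      by (simp add: sum_distrib_left sum_distrib_right mult.assoc) (rule sum.swap)
    finally show ?thesis using True unfolding mat_apply_def by (auto intro!: sum.cong)
  qed (simp add: mat_apply_def)
qed

lemma mat_apply_lin:
  assumes "\<forall>j. u j + v j = c * x j"
  shows "mat_apply n A u i + mat_apply n A v i = c * mat_apply n A x i"
proof -
  have "(\<Sum>j<n. A i j * u j) + (\<Sum>j<n. A i j * v j) = c * (\<Sum>j<n. A i j * x j)"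
  proof -
    have "(\<Sum>j<n. A i j * u j) + (\<Sum>j<n. A i j * v j) = (\<Sum>j<n. A i j * (u j + v j))"
      by (simp add: sum.distrib distrib_left)
    also have "\<dots> = (\<Sum>j<n. c * (A i j * x j))" using assms by (simp add: mult.left_commute)
    also have "\<dots> = c * (\<Sum>j<n. A i j * x j)" by (simp add: sum_distrib_left)
    finally show ?thesis .
  qed
  thus ?thesis unfolding mat_apply_def by simp
qed

lemma core:
  fixes S :: "'a set" and s t :: "'a \<Rightarrow> 'a" and F :: "'a \<Rightarrow> real"
  assumes fin: "finite S" and cs: "\<forall>h\<in>S. s h \<in> S" and ct: "\<forall>h\<in>S. t h \<in> S"
    and rel: "\<forall>h\<in>S. 2 * F (s h) + 2 * F (t h) - F h = 0"
  shows "\<forall>h\<in>S. F h = 0"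
proof -
  obtain L where L: "distinct L" "set L = S" using finite_distinct_list[OF fin] by blast
  show ?thesis using X2[OF X1[of "length L" L s t] L(1) refl, of F] cs ct rel L(2) by blast
qed

theorem theorem2:
  shows "\<exists>X. X \<subseteq> circle \<and> card X = 3 \<and>
    \<not> (\<exists>(G :: nat monoid) n \<rho>. group G \<and> finite (carrier G) \<and> n \<ge> 2 \<and>
          orthogonal_action G n \<rho> \<and> in_single_orbit G n \<rho> X)"
proof -
  define r :: real where "r = sqrt 15 / 4"
  define p1 :: "real \<times> real" where "p1 = (1/4, r)"
  define p2 :: "real \<times> real" where "p2 = (1, 0)"
  define p3 :: "real \<times> real" where "p3 = (1/4, -r)"
  have r2: "r^2 = 15/16" unfolding r_def by (simp add: power_divide)
  have rpos: "r > 0" unfolding r_def by simp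
  have q: "(1/4::real)^2 = 1/16" by (simp add: power2_eq_square)
  have e1: "(1/4::real)^2 + r^2 = 1" using q r2 by linarith
  have e3: "(1/4::real)^2 + (-r)^2 = 1" using q r2 by simp
  have c1: "p1 \<in> circle" unfolding circle_def p1_def using e1 by simp
  have c2: "p2 \<in> circle" unfolding circle_def p2_def by simp
  have c3: "p3 \<in> circle" unfolding circle_def p3_def using e3 by simp
  have sub: "{p1,p2,p3} \<subseteq> circle" using c1 c2 c3 by blast
  have d12: "p1 \<noteq> p2" unfolding p1_def p2_def by simp
  have d13: "p1 \<noteq> p3" unfolding p1_def p3_def using rpos by simp
  have d23: "p2 \<noteq> p3" unfolding p2_def p3_def by simp
  have card: "card {p1,p2,p3} = 3" using d12 d13 d23 by simp
  have notorb: "\<not> (\<exists>(G :: nat monoid) n \<rho>. group G \<and> finite (carrier G) \<and> n \<ge> 2 \<and>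
          orthogonal_action G n \<rho> \<and> in_single_orbit G n \<rho> {p1,p2,p3})"
  proof
    assume "\<exists>(G :: nat monoid) n \<rho>. group G \<and> finite (carrier G) \<and> n \<ge> 2 \<and>
          orthogonal_action G n \<rho> \<and> in_single_orbit G n \<rho> {p1,p2,p3}"
    then obtain G :: "nat monoid" and n \<rho> where gr: "group G" and fin: "finite (carrier G)"
      and n2: "n \<ge> 2" and act: "orthogonal_action G n \<rho>" and orb: "in_single_orbit G n \<rho> {p1,p2,p3}"
      by blast
    interpret group G by (rule gr)
    obtain y where y: "\<forall>p\<in>{p1,p2,p3}. \<exists>g\<in>carrier G. embed2 p = mat_apply n (\<rho> g) y"
      using orb unfolding in_single_orbit_def by blast
    obtain g1 where g1: "g1 \<in> carrier G" "embed2 p1 = mat_apply n (\<rho> g1) y" using y by auto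
    obtain g2 where g2: "g2 \<in> carrier G" "embed2 p2 = mat_apply n (\<rho> g2) y" using y by auto
    obtain g3 where g3: "g3 \<in> carrier G" "embed2 p3 = mat_apply n (\<rho> g3) y" using y by auto
    define s where "s = (\<lambda>h. h \<otimes>\<^bsub>G\<^esub> (g1 \<otimes>\<^bsub>G\<^esub> inv\<^bsub>G\<^esub> g2))"
    define t where "t = (\<lambda>h. h \<otimes>\<^bsub>G\<^esub> (g3 \<otimes>\<^bsub>G\<^esub> inv\<^bsub>G\<^esub> g2))"
    define w where "w = embed2 p2"
    define F where "F = (\<lambda>h. \<Sum>i<n. w i * mat_apply n (\<rho> (h \<otimes>\<^bsub>G\<^esub> g2)) y i)"
    have key: "\<And>h g. h \<in> carrier G \<Longrightarrow> g \<in> carrier G \<Longrightarrow>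
        mat_apply n (\<rho> (h \<otimes>\<^bsub>G\<^esub> g)) y = mat_apply n (\<rho> h) (mat_apply n (\<rho> g) y)"
      using mat_apply_mult[OF act] by blast
    have Fs: "F (s h) = (\<Sum>i<n. w i * mat_apply n (\<rho> h) (embed2 p1) i)" if h: "h \<in> carrier G" for h
    proof -
      have "s h \<otimes>\<^bsub>G\<^esub> g2 = h \<otimes>\<^bsub>G\<^esub> g1" unfolding s_def using h g1 g2 by (simp add: m_assoc)
      thus ?thesis unfolding F_def using key[OF h g1(1)] g1(2) by simp
    qed
    have Ft: "F (t h) = (\<Sum>i<n. w i * mat_apply n (\<rho> h) (embed2 p3) i)" if h: "h \<in> carrier G" for h
    proof -
      have "t h \<otimes>\<^bsub>G\<^esub> g2 = h \<otimes>\<^bsub>G\<^esub> g3" unfolding t_def using h g3 g2 by (simp add: m_assoc)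
      thus ?thesis unfolding F_def using key[OF h g3(1)] g3(2) by simp
    qed
    have Fh: "F h = (\<Sum>i<n. w i * mat_apply n (\<rho> h) (embed2 p2) i)" if h: "h \<in> carrier G" for h
      unfolding F_def using key[OF h g2(1)] g2(2) by simp
    have lin: "\<forall>j. embed2 p1 j + embed2 p3 j = (1/2) * embed2 p2 j"
      unfolding embed2_def p1_def p2_def p3_def by simp
    have rel: "\<forall>h\<in>carrier G. 2 * F (s h) + 2 * F (t h) - F h = 0"
    proof
      fix h assume h: "h \<in> carrier G"
      have "2 * F (s h) + 2 * F (t h) - F h = (\<Sum>i<n. w i * (2 * (mat_apply n (\<rho> h) (embed2 p1) i + mat_apply n (\<rho> h) (embed2 p3) i) - mat_apply n (\<rho> h) (embed2 p2) i))"
        unfolding Fs[OF h] Ft[OF h] Fh[OF h]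
        by (simp add: sum_distrib_left sum.distrib sum_subtractf algebra_simps)
      also have "\<dots> = 0"
      proof -
        have e: "\<And>i. mat_apply n (\<rho> h) (embed2 p1) i + mat_apply n (\<rho> h) (embed2 p3) i = (1/2) * mat_apply n (\<rho> h) (embed2 p2) i"
          by (rule mat_apply_lin[OF lin])
        show ?thesis unfolding e by simp
      qed
      finally show "2 * F (s h) + 2 * F (t h) - F h = 0" .
    qed
    have "\<forall>h\<in>carrier G. F h = 0"
      by (rule core[OF fin _ _ rel]) (auto simp: s_def t_def g1 g2 g3)
    hence "F \<one>\<^bsub>G\<^esub> = 0" by simp
    moreover have "F \<one>\<^bsub>G\<^esub> = 1"
    proof -
      have "F \<one>\<^bsub>G\<^esub> = (\<Sum>i<n. w i * w i)" unfolding F_def w_def using g2 by simp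
      also have "\<dots> = (\<Sum>i<n. if i = 0 then 1 else 0)"
        by (intro sum.cong) (auto simp: w_def embed2_def p2_def)
      also have "\<dots> = 1" using n2 by simp
      finally show ?thesis .
    qed
    ultimately show False by simp
  qed
  show ?thesis using sub card notorb by (intro exI[of _ "{p1,p2,p3}"] conjI) assumption+
qed

end
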